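(* Let $[X,A]$ be a Banach space with an $i$-operator such that $[X,A]\not\simeq[X,-A]$ and $[X,A]\simeq[X\oplus X,A\oplus A]$. Let $\mathfrak C$ consist of all complex operators $[T,A',B']:[U,A']\to[V,B']$ (between arbitrary Banach spaces with an $i$-operator) that factor over $[X,A]$, i.e. $T=RS$ for some bounded linear $S:U\to X$ and $R:X\to V$ with $SA'=AS$ and $RA=B'R$. Then $\mathfrak C$ is a complex operator ideal which is not self conjugate.
   Context: A Banach space with an $i$-operator is a pair $[X,A]$ with $X$ a real Banach space and $A:X\to X$ bounded linear with $A^2=-I_X$ and $\|\alpha x+\beta Ax\|=\|x\|$ whenever $\alpha^2+\beta^2=1$; these are exactly complex Banach spaces, and $[X,-A]$ is the complex conjugate space. A bounded linear $T:X\to Y$ with $TA=BT$ is a complex operator $[T,A,B]:[X,A]\to[Y,B]$; two such spaces are isomorphic ($\simeq$) if there is such a $T$ that is bijective. $A\oplus A$ is the $i$-operator $(x_1,x_2)\mapsto(Ax_1,Ax_2)$ on $X\oplus X$ (e.g. with norm $\|x_1\|+\|x_2\|$). A complex operator ideal (Pietsch) assigns to each pair of such spaces a linear subspace of complex operators between them, containing all finite rank complex operators and stable under composition on either side with bounded complex operators. It is self conjugate if $[T,A,B]\in\mathfrak C$ implies $[T,-A,-B]\in\mathfrak C$ and conversely, i.e. $\{[T,-A,-B]:[T,A,B]\in\mathfrak C\}=\mathfrak C$. *)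

theory Defs
  imports "HOL-Analysis.Analysis"
begin

definition i_operator :: "('a::banach \<Rightarrow> 'a) \<Rightarrow> bool" where
  "i_operator A \<longleftrightarrow> bounded_linear A \<and> (\<forall>x. A (A x) = - x) \<and>
     (\<forall>(\<alpha>::real) (\<beta>::real) x. \<alpha>\<^sup>2 + \<beta>\<^sup>2 = 1 \<longrightarrow> norm (\<alpha> *\<^sub>R x + \<beta> *\<^sub>R A x) = norm x)"

definition conj_op :: "('a::banach \<Rightarrow> 'a) \<Rightarrow> ('a \<Rightarrow> 'a)" where
  "conj_op A = (\<lambda>x. - A x)"

definition sum_op :: "('a::banach \<Rightarrow> 'a) \<Rightarrow> ('a \<times> 'a \<Rightarrow> 'a \<times> 'a)" where
  "sum_op A = (\<lambda>(x1, x2). (A x1, A x2))"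

definition complex_op :: "('a::banach \<Rightarrow> 'b::banach) \<Rightarrow> ('a \<Rightarrow> 'a) \<Rightarrow> ('b \<Rightarrow> 'b) \<Rightarrow> bool" where
  "complex_op T A B \<longleftrightarrow> bounded_linear T \<and> T \<circ> A = B \<circ> T"

definition cisomorphic :: "('a::banach \<Rightarrow> 'a) \<Rightarrow> ('b::banach \<Rightarrow> 'b) \<Rightarrow> bool" where
  "cisomorphic A B \<longleftrightarrow> (\<exists>T. complex_op T A B \<and> bij T)"

text \<open>Multiplication by the complex scalar c in the complex space [Y,B]:
  (a + i b) y = a y + b B y.\<close>
definition cscale :: "('b::banach \<Rightarrow> 'b) \<Rightarrow> complex \<Rightarrow> 'b \<Rightarrow> 'b" where
  "cscale B c y = Re c *\<^sub>R y + Im c *\<^sub>R B y"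

definition finite_rank :: "('a::real_vector \<Rightarrow> 'b::real_vector) \<Rightarrow> bool" where
  "finite_rank T \<longleftrightarrow> (\<exists>F. finite F \<and> range T \<subseteq> span F)"

definition factors_over :: "('x::banach \<Rightarrow> 'x) \<Rightarrow> ('u::banach \<Rightarrow> 'u) \<Rightarrow> ('v::banach \<Rightarrow> 'v)
     \<Rightarrow> ('u \<Rightarrow> 'v) \<Rightarrow> bool" where
  "factors_over A A' B' T \<longleftrightarrow>
     (\<exists>(S::'u \<Rightarrow> 'x) (R::'x \<Rightarrow> 'v). complex_op S A' A \<and> complex_op R A B' \<and> T = R \<circ> S)"

end

theory Submission
  imports Defs
begin

definition goodG :: "('a::real_normed_vector \<times> real) set \<Rightarrow> bool" where
  "goodG G \<longleftrightarrow> (\<forall>x a y b. (x,a)\<in>G \<longrightarrow> (y,b)\<in>G \<longrightarrow> (x+y, a+b)\<in>G) \<and>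
     (\<forall>x a c. (x,a)\<in>G \<longrightarrow> (c *\<^sub>R x, c*a) \<in> G) \<and> (\<forall>x a. (x,a)\<in>G \<longrightarrow> a \<le> norm x)"


lemma goodG_add: "goodG G \<Longrightarrow> (x,a)\<in>G \<Longrightarrow> (y,b)\<in>G \<Longrightarrow> (x+y, a+b)\<in>G"
  unfolding goodG_def by blast
lemma goodG_scale: "goodG G \<Longrightarrow> (x,a)\<in>G \<Longrightarrow> (c *\<^sub>R x, c*a)\<in>G"
  unfolding goodG_def by blast
lemma goodG_le: "goodG G \<Longrightarrow> (x,a)\<in>G \<Longrightarrow> a \<le> norm x"
  unfolding goodG_def by blast
lemma goodGI:
  assumes "\<And>x a y b. (x,a)\<in>G \<Longrightarrow> (y,b)\<in>G \<Longrightarrow> (x+y, a+b)\<in>G"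
    "\<And>x a c. (x,a)\<in>G \<Longrightarrow> (c *\<^sub>R x, c*a) \<in> G" "\<And>x a. (x,a)\<in>G \<Longrightarrow> a \<le> norm x"
  shows "goodG G" using assms unfolding goodG_def by blast

lemma goodG_unique:
  assumes "goodG G" "(x,a)\<in>G" "(x,b)\<in>G" shows "a = b"
proof -
  have "(x + (-1) *\<^sub>R x, a + (-1)*b) \<in> G" using assms unfolding goodG_def by blast
  then have "a - b \<le> 0" using assms(1) unfolding goodG_def by fastforce
  moreover have "(x + (-1) *\<^sub>R x, b + (-1)*a) \<in> G" using assms unfolding goodG_def by blast
  then have "b - a \<le> 0" using assms(1) unfolding goodG_def by fastforce
  ultimately show ?thesis by simp
qed

lemma goodG_extend:
  fixes G :: "('a::real_normed_vector \<times> real) set"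
  assumes g: "goodG G" and z: "(0,0) \<in> G" and nx: "\<forall>a. (x1,a) \<notin> G"
  shows "\<exists>c. goodG {(y + t *\<^sub>R x1, a + t*c) | y a t. (y,a)\<in>G}"
proof -
  have key: "a - norm (u - x1) \<le> norm (v + x1) - b" if "(u,a)\<in>G" "(v,b)\<in>G" for u a v b
  proof -
    have "(u+v, a+b) \<in> G" using g that unfolding goodG_def by blast
    then have "a + b \<le> norm (u+v)" using g unfolding goodG_def by blast
    also have "norm (u+v) \<le> norm (u - x1) + norm (v + x1)"
      using norm_triangle_ineq[of "u - x1" "v + x1"] by simp
    finally show ?thesis by simp
  qed
  define S where "S = {a - norm (y - x1) | y a. (y,a)\<in>G}"
  define c where "c = Sup S"
  have ne: "S \<noteq> {}" using z unfolding S_def by blast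
  have bdd: "bdd_above S" unfolding S_def bdd_above_def using key[OF _ z] by force
  have c_up: "a - norm (u - x1) \<le> c" if "(u,a)\<in>G" for u a
    unfolding c_def using cSup_upper[OF _ bdd] that S_def by blast
  have c_lo: "c \<le> norm (v + x1) - b" if "(v,b)\<in>G" for v b
    unfolding c_def using cSup_least[OF ne] key that S_def by blast
  have scl: "((1/t) *\<^sub>R y, (1/t)*a) \<in> G" if "(y,a)\<in>G" for y a t
    using g that unfolding goodG_def by blast
  let ?G = "{(y + t *\<^sub>R x1, a + t*c) | y a t. (y,a)\<in>G}"
  have "goodG ?G"
    unfolding goodG_def
  proof (intro conjI allI impI)
    fix x a y b assume "(x,a) \<in> ?G" "(y,b) \<in> ?G"
    then obtain y1 a1 t1 y2 a2 t2 where h: "(y1,a1)\<in>G" "(y2,a2)\<in>G"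
      "x = y1 + t1 *\<^sub>R x1" "a = a1 + t1*c" "y = y2 + t2 *\<^sub>R x1" "b = a2 + t2*c" by blast
    have "(y1+y2, a1+a2) \<in> G" using g h unfolding goodG_def by blast
    moreover have "x + y = (y1+y2) + (t1+t2) *\<^sub>R x1" "a + b = (a1+a2) + (t1+t2)*c"
      using h by (auto simp: algebra_simps)
    ultimately show "(x+y, a+b) \<in> ?G" by blast
  next
    fix x a k assume "(x,a) \<in> ?G"
    then obtain y1 a1 t1 where h: "(y1,a1)\<in>G" "x = y1 + t1 *\<^sub>R x1" "a = a1 + t1*c" by blast
    have "(k *\<^sub>R y1, k*a1) \<in> G" using g h unfolding goodG_def by blast
    moreover have "k *\<^sub>R x = k *\<^sub>R y1 + (k*t1) *\<^sub>R x1" "k * a = k*a1 + (k*t1)*c"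
      using h by (auto simp: algebra_simps)
    ultimately show "(k *\<^sub>R x, k*a) \<in> ?G" by blast
  next
    fix x a assume "(x,a) \<in> ?G"
    then obtain y a1 t where h: "(y,a1)\<in>G" "x = y + t *\<^sub>R x1" "a = a1 + t*c" by blast
    consider "t = 0" | "t > 0" | "t < 0" by linarith
    then show "a \<le> norm x"
    proof cases
      case 1 then show ?thesis using g h unfolding goodG_def by auto
    next
      case 2
      have "c \<le> norm ((1/t) *\<^sub>R y + x1) - (1/t)*a1" using c_lo[OF scl[OF h(1)]] .
      then have "t * c \<le> t * (norm ((1/t) *\<^sub>R y + x1) - (1/t)*a1)"
        by (rule mult_left_mono) (use 2 in linarith)
      then have "t * c \<le> t * norm ((1/t) *\<^sub>R y + x1) - a1" using 2
        by (simp add: right_diff_distrib)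
      also have "t * norm ((1/t) *\<^sub>R y + x1) = norm (t *\<^sub>R ((1/t) *\<^sub>R y + x1))" using 2 by simp
      also have "t *\<^sub>R ((1/t) *\<^sub>R y + x1) = y + t *\<^sub>R x1" using 2 by (simp add: scaleR_add_right)
      finally show ?thesis using h by simp
    next
      case 3
      define s where "s = -t"
      have s: "s > 0" using 3 s_def by simp
      have "(1/s)*a1 - norm ((1/s) *\<^sub>R y - x1) \<le> c" using c_up[OF scl[OF h(1)]] .
      then have "s * ((1/s)*a1 - norm ((1/s) *\<^sub>R y - x1)) \<le> s * c"
        by (rule mult_left_mono) (use s in linarith)
      then have "a1 - s * norm ((1/s) *\<^sub>R y - x1) \<le> s * c" using s
        by (simp add: right_diff_distrib)
      also have "s * norm ((1/s) *\<^sub>R y - x1) = norm (s *\<^sub>R ((1/s) *\<^sub>R y - x1))" using s by simp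
      also have "s *\<^sub>R ((1/s) *\<^sub>R y - x1) = y + t *\<^sub>R x1" using s s_def by (simp add: scaleR_diff_right)
      finally show ?thesis using h s_def by simp
    qed
  qed
  then show ?thesis by blast
qed

lemma exists_functional:
  fixes x0 :: "'a::real_normed_vector"
  assumes "x0 \<noteq> 0"
  shows "\<exists>f::'a \<Rightarrow> real. bounded_linear f \<and> f x0 = norm x0"
proof -
  define g0f where "g0f t = (t *\<^sub>R x0, t * norm x0)" for t
  define G0 where "G0 = range g0f"
  have g0: "goodG G0" unfolding goodG_def
  proof (intro conjI allI impI)
    fix x a y b assume "(x, a) \<in> G0" "(y, b) \<in> G0"
    then obtain t s where ts: "(x, a) = g0f t" "(y, b) = g0f s" unfolding G0_def by blast
    have "(x + y, a + b) = g0f (t+s)" using ts by (simp add: g0f_def algebra_simps)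
    then show "(x + y, a + b) \<in> G0" unfolding G0_def by (metis rangeI)
  next
    fix x a c assume "(x, a) \<in> G0"
    then obtain t where ts: "(x, a) = g0f t" unfolding G0_def by blast
    have "(c *\<^sub>R x, c * a) = g0f (c*t)" using ts by (simp add: g0f_def)
    then show "(c *\<^sub>R x, c * a) \<in> G0" unfolding G0_def by (metis rangeI)
  next
    fix x a assume "(x, a) \<in> G0"
    then obtain t where ts: "(x, a) = g0f t" unfolding G0_def by blast
    have "t * norm x0 \<le> \<bar>t\<bar> * norm x0" by (rule mult_right_mono) auto
    then show "a \<le> norm x" using ts by (simp add: g0f_def)
  qed
  define AA where "AA = {G. goodG G \<and> G0 \<subseteq> G}"
  have "\<exists>M\<in>AA. \<forall>X\<in>AA. M \<subseteq> X \<longrightarrow> X = M"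
  proof (rule Zorn_Lemma2, intro ballI)
    fix C assume C: "C \<in> chains AA"
    show "\<exists>U\<in>AA. \<forall>X\<in>C. X \<subseteq> U"
    proof (cases "C = {}")
      case True
      have "G0 \<in> AA" using g0 unfolding AA_def by blast
      then show ?thesis using True by blast
    next
      case False
      have CA: "C \<subseteq> AA" and ch: "\<And>X Y. X\<in>C \<Longrightarrow> Y\<in>C \<Longrightarrow> X \<subseteq> Y \<or> Y \<subseteq> X"
        using C unfolding chains_def chain_subset_def by auto
      have gC: "goodG Z" if "Z \<in> C" for Z using CA that AA_def by blast
      have "goodG (\<Union>C)"
      proof (rule goodGI)
        fix x a y b assume "(x,a) \<in> \<Union>C" "(y,b) \<in> \<Union>C"
        then obtain X Y where XY: "X\<in>C" "Y\<in>C" "(x,a)\<in>X" "(y,b)\<in>Y" by blast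
        then obtain Z where Z: "Z\<in>C" "(x,a)\<in>Z" "(y,b)\<in>Z" using ch[OF XY(1,2)] by blast
        have "(x+y,a+b) \<in> Z" by (rule goodG_add[OF gC[OF Z(1)] Z(2,3)])
        then show "(x+y,a+b) \<in> \<Union>C" using Z(1) by blast
      next
        fix x a k assume "(x,a) \<in> \<Union>C"
        then obtain Z where Z: "Z\<in>C" "(x,a)\<in>Z" by blast
        have "(k *\<^sub>R x, k*a) \<in> Z" by (rule goodG_scale[OF gC[OF Z(1)] Z(2)])
        then show "(k *\<^sub>R x, k*a) \<in> \<Union>C" using Z(1) by blast
      next
        fix x a assume "(x,a) \<in> \<Union>C"
        then obtain Z where Z: "Z\<in>C" "(x,a)\<in>Z" by blast
        show "a \<le> norm x" by (rule goodG_le[OF gC[OF Z(1)] Z(2)])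
      qed
      moreover have "G0 \<subseteq> \<Union>C" using False CA AA_def by blast
      ultimately show ?thesis unfolding AA_def by blast
    qed
  qed
  then obtain M where MA: "M \<in> AA" and mxA: "\<And>X. X \<in> AA \<Longrightarrow> M \<subseteq> X \<Longrightarrow> X = M"
    by blast
  have M: "goodG M" "G0 \<subseteq> M" using MA unfolding AA_def by auto
  have mx: "X = M" if "goodG X" "G0 \<subseteq> X" "M \<subseteq> X" for X
    using mxA[of X] that unfolding AA_def by blast
  have "(0,0) = g0f 0" by (simp add: g0f_def)
  then have z: "(0,0) \<in> M" using M(2) unfolding G0_def by (metis rangeI subsetD)
  have dom: "\<exists>a. (x,a) \<in> M" for x
  proof (rule ccontr)
    assume nx: "\<nexists>a. (x, a) \<in> M"
    then obtain c where gc: "goodG {(y + t *\<^sub>R x, a + t*c) | y a t. (y,a)\<in>M}"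
      using goodG_extend[OF M(1) z] by blast
    let ?M = "{(y + t *\<^sub>R x, a + t*c) | y a t. (y,a)\<in>M}"
    have sub: "M \<subseteq> ?M"
    proof
      fix p assume pM: "p \<in> M"
      obtain y a where p: "p = (y, a)" by (cases p)
      show "p \<in> ?M" unfolding mem_Collect_eq
        by (rule exI[of _ y], rule exI[of _ a], rule exI[of _ 0]) (use pM p in simp)
    qed
    have "(0 + 1 *\<^sub>R x, 0 + 1 * c) \<in> ?M" using z by blast
    then have "(x, c) \<in> ?M" by simp
    moreover have "?M = M" using mx[OF gc] sub M(2) by blast
    ultimately show False using nx by blast
  qed
  define f where "f x = (THE a. (x,a) \<in> M)" for x
  have fM: "(x, f x) \<in> M" for x
  proof -
    have "\<exists>!a. (x,a) \<in> M" using dom[of x] goodG_unique[OF M(1)] by blast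
    then show ?thesis unfolding f_def by (rule theI')
  qed
  have fe: "f x = a" if "(x,a) \<in> M" for x a using goodG_unique[OF M(1) that fM] by simp
  have add: "f (x+y) = f x + f y" for x y
  proof -
    have "(x+y, f x + f y) \<in> M" by (rule goodG_add[OF M(1) fM fM])
    then show ?thesis by (rule fe)
  qed
  have scl: "f (r *\<^sub>R x) = r * f x" for r x
  proof -
    have "(r *\<^sub>R x, r * f x) \<in> M" by (rule goodG_scale[OF M(1) fM])
    then show ?thesis by (rule fe)
  qed
  have le: "f x \<le> norm x" for x by (rule goodG_le[OF M(1) fM])
  have nb: "norm (f x) \<le> norm x * 1" for x
  proof -
    have "f (-x) = - f x" using scl[of "-1" x] by simp
    then show ?thesis using le[of x] le[of "-x"] by simp
  qed
  have "bounded_linear f"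
  proof (rule bounded_linear_intro[where K=1])
    show "f (x+y) = f x + f y" for x y by (rule add)
    show "f (r *\<^sub>R x) = r *\<^sub>R f x" for r x using scl by simp
    show "norm (f x) \<le> norm x * 1" for x by (rule nb)
  qed
  moreover have "f x0 = norm x0"
  proof -
    have "(x0, norm x0) = g0f 1" by (simp add: g0f_def)
    then have "(x0, norm x0) \<in> M" using M(2) unfolding G0_def by (metis rangeI subsetD)
    then show ?thesis using fe by blast
  qed
  ultimately show ?thesis by blast
qed


lemma baire_step:
  fixes T :: "'a::banach \<Rightarrow> 'b::banach"
  assumes su: "surj T"
  shows "\<exists>n y0 r. r > 0 \<and> ball y0 r \<subseteq> closure (T ` cball 0 (real n))"
proof (rule ccontr)
  assume H: "\<not> ?thesis"
  define K where "K n = closure (T ` cball 0 (real n))" for n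
  have int: "interior (K n) = {}" for n
  proof (rule ccontr)
    assume "interior (K n) \<noteq> {}"
    then obtain y where "y \<in> interior (K n)" by blast
    then obtain r where "r > 0" "ball y r \<subseteq> K n"
      using open_contains_ball interior_subset open_interior by (metis subset_trans)
    then show False using H K_def by blast
  qed
  have clK: "closed (K n)" for n by (simp add: K_def)
  have "euclidean interior_of \<Union>(range K) = {}"
  proof (rule Baire_category_alt)
    show "completely_metrizable_space (euclidean::'b topology) \<or> locally_compact_space (euclidean::'b topology) \<and> regular_space (euclidean::'b topology)"
      by (simp add: completely_metrizable_space_euclidean)
    show "countable (range K)" by simp
    fix T' assume "T' \<in> range K"
    then obtain n where "T' = K n" by blast
    then show "closedin euclidean T' \<and> euclidean interior_of T' = {}"
      using int clK by (simp add: closed_closedin[symmetric])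
  qed
  moreover have "\<Union>(range K) = UNIV"
  proof -
    have "y \<in> K (nat \<lceil>norm x\<rceil>)" if "y = T x" for x y
    proof -
      have "x \<in> cball 0 (real (nat \<lceil>norm x\<rceil>))" by (simp add: real_nat_ceiling_ge)
      then show ?thesis unfolding K_def using that closure_subset by blast
    qed
    then show ?thesis using su by (metis UNIV_eq_I UN_iff rangeI surjD)
  qed
  ultimately show False by simp
qed

lemma approx_step:
  fixes T :: "'a::banach \<Rightarrow> 'b::banach"
  assumes bl: "bounded_linear T" and su: "surj T"
  shows "\<exists>C>0. \<forall>y. \<exists>x. norm x \<le> C * norm y \<and> norm (y - T x) \<le> norm y / 2"
proof -
  interpret T: bounded_linear T by fact
  obtain n y0 r where r: "r > 0" and B: "ball y0 r \<subseteq> closure (T ` cball 0 (real n))"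
    using baire_step[OF su] by blast
  have ap: "\<exists>x. norm x \<le> 2 * real n \<and> norm (T x - y) < e" if "norm y < r" "e > 0" for y e
  proof -
    have "y0 + y \<in> closure (T ` cball 0 (real n))" "y0 \<in> closure (T ` cball 0 (real n))"
      using B that r by (auto simp: dist_norm)
    then have c1: "\<And>d. d > 0 \<Longrightarrow> \<exists>z\<in>T ` cball 0 (real n). dist z (y0 + y) < d"
      and c2: "\<And>d. d > 0 \<Longrightarrow> \<exists>z\<in>T ` cball 0 (real n). dist z y0 < d"
      unfolding closure_approachable by auto
    obtain x1 where x1: "x1 \<in> cball 0 (real n)" "dist (T x1) (y0 + y) < e/2"
      using c1[of "e/2"] \<open>e > 0\<close> by auto
    obtain x2 where x2: "x2 \<in> cball 0 (real n)" "dist (T x2) y0 < e/2"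
      using c2[of "e/2"] \<open>e > 0\<close> by auto
    note x = x1 x2
    have "norm (x1 - x2) \<le> norm x1 + norm x2" by (rule norm_triangle_ineq4)
    also have "\<dots> \<le> 2 * real n" using x by auto
    finally have "norm (x1 - x2) \<le> 2 * real n" .
    moreover have "T (x1 - x2) - y = (T x1 - (y0 + y)) - (T x2 - y0)" by (simp add: T.diff)
    then have "norm (T (x1 - x2) - y) \<le> norm (T x1 - (y0 + y)) + norm (T x2 - y0)"
      by (metis norm_triangle_ineq4)
    then have "norm (T (x1 - x2) - y) < e" using x by (simp add: dist_norm)
    ultimately show ?thesis by blast
  qed
  define C where "C = 4 * real n / r + 1"
  have "4 * real n / r \<ge> 0" using r by simp
  then have C: "C > 0" by (simp add: C_def)
  have "\<exists>x. norm x \<le> C * norm y \<and> norm (y - T x) \<le> norm y / 2" for y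
  proof (cases "y = 0")
    case True then show ?thesis by (intro exI[of _ 0]) auto
  next
    case False
    define s where "s = r / (2 * norm y)"
    have s: "s > 0" using False r by (simp add: s_def)
    have "norm (s *\<^sub>R y) < r" using False r by (simp add: s_def)
    then obtain x' where x': "norm x' \<le> 2 * real n" "norm (T x' - s *\<^sub>R y) < r/4"
      using ap r by (meson divide_pos_pos zero_less_numeral)
    define x where "x = (1/s) *\<^sub>R x'"
    have "norm x = (1/s) * norm x'" using s by (simp add: x_def)
    also have "\<dots> \<le> (1/s) * (2 * real n)" using x' s by (simp add: divide_right_mono)
    also have "\<dots> = (4 * real n / r) * norm y" using False r by (simp add: s_def field_simps)
    also have "\<dots> \<le> C * norm y" by (rule mult_right_mono) (simp_all add: C_def)
    finally have nx: "norm x \<le> C * norm y" .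
    have "y - T x = (1/s) *\<^sub>R (s *\<^sub>R y - T x')" using s by (simp add: x_def T.scaleR algebra_simps)
    then have "norm (y - T x) = (1/s) * norm (T x' - s *\<^sub>R y)" using s by (simp add: norm_minus_commute)
    also have "\<dots> \<le> (1/s) * (r/4)" by (rule mult_left_mono) (use x' s in auto)
    also have "\<dots> = norm y / 2" using False r by (simp add: s_def field_simps)
    finally show ?thesis using nx by blast
  qed
  then show ?thesis using C by blast
qed

lemma open_mapping_bound:
  fixes T :: "'a::banach \<Rightarrow> 'b::banach"
  assumes bl: "bounded_linear T" and su: "surj T"
  shows "\<exists>C. \<forall>y. \<exists>x. T x = y \<and> norm x \<le> C * norm y"
proof -
  interpret T: bounded_linear T by fact
  obtain C where C: "C > 0" and ex: "\<And>y. \<exists>x. norm x \<le> C * norm y \<and> norm (y - T x) \<le> norm y / 2"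
    using approx_step[OF bl su] by blast
  define f where "f y = (SOME x. norm x \<le> C * norm y \<and> norm (y - T x) \<le> norm y / 2)" for y
  have f: "norm (f y) \<le> C * norm y" "norm (y - T (f y)) \<le> norm y / 2" for y
    using someI_ex[OF ex[of y]] unfolding f_def by auto
  have "\<exists>x. T x = y \<and> norm x \<le> (2*C) * norm y" for y
  proof -
    define ys where "ys k = ((\<lambda>z. z - T (f z)) ^^ k) y" for k
    have ys_Suc: "ys (Suc k) = ys k - T (f (ys k))" for k by (simp add: ys_def)
    have ysb: "norm (ys k) \<le> norm y * (1/2)^k" for k
    proof (induction k)
      case 0 then show ?case by (simp add: ys_def)
    next
      case (Suc k)
      have "norm (ys (Suc k)) \<le> norm (ys k) / 2" using f(2)[of "ys k"] by (simp add: ys_Suc)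
      also have "\<dots> \<le> norm y * (1/2)^k / 2" using Suc by simp
      finally show ?case by simp
    qed
    define xs where "xs k = f (ys k)" for k
    have xsb: "norm (xs k) \<le> C * norm y * (1/2)^k" for k
      using f(1)[of "ys k"] ysb[of k] C unfolding xs_def
      by (metis (no_types, opaque_lifting) mult.assoc mult_left_mono less_imp_le order_trans)
    have sg: "summable (\<lambda>k. C * norm y * (1/2::real)^k)"
      by (intro summable_mult summable_geometric) simp
    have sx: "summable xs" by (rule summable_comparison_test'[OF sg xsb])
    have snx: "summable (\<lambda>k. norm (xs k))"
      by (rule summable_comparison_test'[OF sg]) (use xsb in simp)
    have "norm (suminf xs) \<le> (\<Sum>k. norm (xs k))" by (rule summable_norm[OF snx])
    also have "\<dots> \<le> (\<Sum>k. C * norm y * (1/2::real)^k)" by (rule suminf_le[OF xsb snx sg])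
    also have "\<dots> = C * norm y * 2" by (simp add: suminf_mult suminf_geometric)
    finally have nb: "norm (suminf xs) \<le> (2*C) * norm y" by simp
    have y0: "ys \<longlonglongrightarrow> 0"
    proof (rule Lim_null_comparison)
      show "\<forall>\<^sub>F k in sequentially. norm (ys k) \<le> norm y * (1/2)^k" using ysb by simp
      show "(\<lambda>k. norm y * (1/2::real)^k) \<longlonglongrightarrow> 0"
        by (intro tendsto_mult_right_zero LIMSEQ_power_zero) simp
    qed
    have "(\<lambda>k. ys (Suc k) - ys k) sums (0 - ys 0)" by (rule telescope_sums[OF y0])
    then have "(\<lambda>k. - (ys (Suc k) - ys k)) sums (- (0 - ys 0))" by (rule sums_minus)
    then have "(\<lambda>k. T (xs k)) sums y" by (simp add: ys_Suc xs_def ys_def)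
    moreover have "(\<lambda>k. T (xs k)) sums T (suminf xs)"
      using T.suminf[OF sx] sx T.summable summable_sums by (metis (no_types, lifting))
    ultimately have "T (suminf xs) = y" using sums_unique2 by blast
    then show ?thesis using nb by blast
  qed
  then show ?thesis by blast
qed

lemma bounded_inverse:
  fixes T :: "'a::banach \<Rightarrow> 'b::banach"
  assumes bl: "bounded_linear T" and bj: "bij T"
  shows "bounded_linear (inv T)"
proof -
  interpret T: bounded_linear T by fact
  obtain C where C: "\<And>y. \<exists>x. T x = y \<and> norm x \<le> C * norm y"
    using open_mapping_bound[OF bl bij_is_surj[OF bj]] by blast
  have TI: "T (inv T y) = y" for y using bj by (simp add: bij_is_surj surj_f_inv_f)
  have IT: "inv T (T x) = x" for x using bj by (simp add: bij_is_inj)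
  show ?thesis
  proof (rule bounded_linear_intro)
    show "inv T (x + y) = inv T x + inv T y" for x y
      by (metis IT TI T.add)
    show "inv T (r *\<^sub>R x) = r *\<^sub>R inv T x" for r x
      by (metis IT TI T.scaleR)
    show "norm (inv T x) \<le> norm x * C" for x
      using C[of x] IT by (metis mult.commute)
  qed
qed


lemma bl_scale_const: "bounded_linear f \<Longrightarrow> bounded_linear (\<lambda>x. c *\<^sub>R f x)"
  using bounded_linear_compose[OF bounded_linear_scaleR_right] by blast
lemma bl_scale_fun: "bounded_linear (g :: 'a::real_normed_vector \<Rightarrow> real) \<Longrightarrow> bounded_linear (\<lambda>x. g x *\<^sub>R e)"
  using bounded_linear_compose[OF bounded_linear_scaleR_left] by blast
lemma bl_div: "bounded_linear (g :: 'a::real_normed_vector \<Rightarrow> real) \<Longrightarrow> bounded_linear (\<lambda>x. g x / c)"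
  using bounded_linear_compose[OF bounded_linear_divide] by blast
lemma bl_mult: "bounded_linear (g :: 'a::real_normed_vector \<Rightarrow> real) \<Longrightarrow> bounded_linear (\<lambda>x. c * g x)"
  using bounded_linear_compose[OF bounded_linear_mult_right] by blast

lemma iop_bl: "i_operator A \<Longrightarrow> bounded_linear A" by (simp add: i_operator_def)
lemma iop_sq: "i_operator A \<Longrightarrow> A (A x) = - x" by (simp add: i_operator_def)

lemma co_comp:
  assumes "complex_op S A B" "complex_op R B C" shows "complex_op (R \<circ> S) A C"
proof -
  have bS: "bounded_linear S" and eS: "S \<circ> A = B \<circ> S" using assms(1) unfolding complex_op_def by auto
  have bR: "bounded_linear R" and eR: "R \<circ> B = C \<circ> R" using assms(2) unfolding complex_op_def by auto
  have "bounded_linear (\<lambda>x. R (S x))" by (rule bounded_linear_compose[OF bR bS])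
  then have "bounded_linear (R \<circ> S)" by (simp add: comp_def)
  moreover have "(R \<circ> S) \<circ> A = C \<circ> (R \<circ> S)"
  proof -
    have "(R \<circ> S) \<circ> A = R \<circ> (S \<circ> A)" by (simp add: comp_assoc)
    also have "\<dots> = (R \<circ> B) \<circ> S" by (simp add: eS comp_assoc)
    also have "\<dots> = C \<circ> (R \<circ> S)" by (simp add: eR comp_assoc)
    finally show ?thesis .
  qed
  ultimately show ?thesis unfolding complex_op_def by blast
qed

lemma co_app: "complex_op S A B \<Longrightarrow> S (A x) = B (S x)"
  unfolding complex_op_def by (metis comp_apply)

lemma coI: "bounded_linear S \<Longrightarrow> (\<And>x. S (A x) = B (S x)) \<Longrightarrow> complex_op S A B"
  unfolding complex_op_def by auto

lemma fo_member: "factors_over A A1 B1 T \<Longrightarrow> complex_op T A1 B1"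
  unfolding factors_over_def using co_comp by blast

lemma fo_zero:
  fixes A :: "'x::banach \<Rightarrow> 'x" and B1 :: "'v::banach \<Rightarrow> 'v"
  assumes "i_operator A" "i_operator B1"
  shows "factors_over A A1 B1 (\<lambda>_. 0)"
proof -
  interpret a: bounded_linear A using iop_bl[OF assms(1)] .
  interpret b: bounded_linear B1 using iop_bl[OF assms(2)] .
  have "complex_op (\<lambda>_. 0::'x) A1 A" by (rule coI) auto
  moreover have "complex_op (\<lambda>_. 0::'v) A B1" by (rule coI) auto
  ultimately show ?thesis unfolding factors_over_def by (intro exI[of _ "\<lambda>_. 0"]) auto
qed

lemma fo_comp:
  assumes "factors_over A A1 B1 T" "complex_op R B1 C1" "complex_op S D1 A1"
  shows "factors_over A D1 C1 (R \<circ> T \<circ> S)"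
proof -
  obtain S0 R0 where h: "complex_op S0 A1 A" "complex_op R0 A B1" "T = R0 \<circ> S0"
    using assms(1) unfolding factors_over_def by blast
  have "complex_op (S0 \<circ> S) D1 A" using co_comp[OF assms(3) h(1)] .
  moreover have "complex_op (R \<circ> R0) A C1" using co_comp[OF h(2) assms(2)] .
  moreover have "R \<circ> T \<circ> S = (R \<circ> R0) \<circ> (S0 \<circ> S)" using h(3) by (simp add: comp_assoc)
  ultimately show ?thesis unfolding factors_over_def by blast
qed

lemma cscale_bl: "bounded_linear B \<Longrightarrow> bounded_linear (cscale B c)"
  unfolding cscale_def
  by (intro bounded_linear_add bl_scale_const bounded_linear_ident) auto

lemma fo_scale:
  assumes "i_operator A" "i_operator B1" "factors_over A A1 B1 T"
  shows "factors_over A A1 B1 (\<lambda>u. cscale B1 c (T u))"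
proof -
  interpret a: bounded_linear A using iop_bl[OF assms(1)] .
  obtain S0 R0 where h: "complex_op S0 A1 A" "complex_op R0 A B1" "T = R0 \<circ> S0"
    using assms(3) unfolding factors_over_def by blast
  interpret r: bounded_linear R0 using h(2) complex_op_def by blast
  interpret b: bounded_linear B1 using iop_bl[OF assms(2)] .
  have blR: "bounded_linear (R0 \<circ> cscale A c)"
    using bounded_linear_compose[OF r.bounded_linear_axioms cscale_bl[OF iop_bl[OF assms(1)]]]
    by (simp add: comp_def)
  have "complex_op (R0 \<circ> cscale A c) A B1"
  proof (rule coI[OF blR])
    fix x
    show "(R0 \<circ> cscale A c) (A x) = B1 ((R0 \<circ> cscale A c) x)"
      using iop_sq[OF assms(1)] iop_sq[OF assms(2)]
      by (simp add: cscale_def r.add r.diff r.scaleR a.add a.scaleR co_app[OF h(2)] b.add b.scaleR)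
  qed
  moreover have "(\<lambda>u. cscale B1 c (T u)) = (R0 \<circ> cscale A c) \<circ> S0"
  proof
    fix u
    show "cscale B1 c (T u) = ((R0 \<circ> cscale A c) \<circ> S0) u"
      using h(3) by (simp add: cscale_def r.add r.scaleR co_app[OF h(2)])
  qed
  ultimately show ?thesis using h(1) unfolding factors_over_def by blast
qed

lemma sum_op_app: "sum_op A (a, b) = (A a, A b)" by (simp add: sum_op_def)

lemma J_facts:
  fixes A :: "'x::banach \<Rightarrow> 'x"
  assumes iA: "i_operator A" and J: "complex_op J A (sum_op A)" "bij J"
  shows "bounded_linear (inv J)" "\<And>p. J (inv J p) = p" "\<And>x. inv J (J x) = x"
    "\<And>a b. inv J (A a, A b) = A (inv J (a, b))"
    "\<And>x. J (A x) = (A (fst (J x)), A (snd (J x)))"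
proof -
  show bl: "bounded_linear (inv J)" using bounded_inverse J complex_op_def by blast
  show JK: "J (inv J p) = p" for p using J(2) by (simp add: bij_is_surj surj_f_inv_f)
  show KJ: "inv J (J x) = x" for x using J(2) by (simp add: bij_is_inj)
  show JA: "J (A x) = (A (fst (J x)), A (snd (J x)))" for x
    using co_app[OF J(1)] by (metis sum_op_app prod.collapse)
  show "inv J (A a, A b) = A (inv J (a, b))" for a b
    using JA[of "inv J (a,b)"] JK[of "(a,b)"] KJ by (metis fst_conv snd_conv)
qed

lemma fo_add:
  fixes A :: "'x::banach \<Rightarrow> 'x" and B1 :: "'v::banach \<Rightarrow> 'v"
  assumes iA: "i_operator A" and iB: "i_operator B1"
    and J: "complex_op J A (sum_op A)" "bij J"
    and f1: "factors_over A A1 B1 T1" and f2: "factors_over A A1 B1 T2"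
  shows "factors_over A A1 B1 (\<lambda>u. T1 u + T2 u)"
proof -
  obtain S1 R1 where h1: "complex_op S1 A1 A" "complex_op R1 A B1" "T1 = R1 \<circ> S1"
    using f1 unfolding factors_over_def by blast
  obtain S2 R2 where h2: "complex_op S2 A1 A" "complex_op R2 A B1" "T2 = R2 \<circ> S2"
    using f2 unfolding factors_over_def by blast
  note Jf = J_facts[OF iA J]
  interpret b: bounded_linear B1 using iop_bl[OF iB] .
  define S where "S u = inv J (S1 u, S2 u)" for u
  define R where "R x = R1 (fst (J x)) + R2 (snd (J x))" for x
  have blS: "bounded_linear S"
  proof -
    have "bounded_linear (\<lambda>u. (S1 u, S2 u))"
      using h1(1) h2(1) complex_op_def bounded_linear_Pair by blast
    then show ?thesis unfolding S_def using bounded_linear_compose[OF Jf(1)] by blast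
  qed
  have blR: "bounded_linear R"
  proof -
    have bJ: "bounded_linear J" using J(1) complex_op_def by blast
    have "bounded_linear (\<lambda>x. R1 (fst (J x)))"
      using bounded_linear_compose[OF _ bounded_linear_compose[OF bounded_linear_fst bJ]] h1(2) complex_op_def by blast
    moreover have "bounded_linear (\<lambda>x. R2 (snd (J x)))"
      using bounded_linear_compose[OF _ bounded_linear_compose[OF bounded_linear_snd bJ]] h2(2) complex_op_def by blast
    ultimately show ?thesis unfolding R_def by (rule bounded_linear_add)
  qed
  have "complex_op S A1 A"
    by (rule coI[OF blS]) (simp add: S_def co_app[OF h1(1)] co_app[OF h2(1)] Jf(4))
  moreover have "complex_op R A B1"
    by (rule coI[OF blR]) (simp add: R_def Jf(5) co_app[OF h1(2)] co_app[OF h2(2)] b.add)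
  moreover have "(\<lambda>u. T1 u + T2 u) = R \<circ> S"
    by (rule ext) (simp add: R_def S_def Jf(2) h1(3) h2(3))
  ultimately show ?thesis unfolding factors_over_def by blast
qed

lemma fo_rank1:
  fixes A :: "'x::banach \<Rightarrow> 'x" and A1 :: "'u::banach \<Rightarrow> 'u" and B1 :: "'v::banach \<Rightarrow> 'v"
  assumes iA: "i_operator A" and iA1: "i_operator A1" and iB: "i_operator B1"
    and x0: "(x0::'x) \<noteq> 0" and ba: "bounded_linear (a :: 'u \<Rightarrow> real)"
  shows "factors_over A A1 B1 (\<lambda>u. a u *\<^sub>R e - a (A1 u) *\<^sub>R B1 e)"
proof -
  interpret A: bounded_linear A using iop_bl[OF iA] .
  interpret A1: bounded_linear A1 using iop_bl[OF iA1] .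
  interpret B1: bounded_linear B1 using iop_bl[OF iB] .
  interpret a: bounded_linear a by fact
  obtain f :: "'x \<Rightarrow> real" where bf: "bounded_linear f" and fx: "f x0 = norm x0"
    using exists_functional[OF x0] by blast
  interpret f: bounded_linear f by fact
  define p where "p = f x0"
  define q where "q = f (A x0)"
  define d where "d = p^2 + q^2"
  have "p \<noteq> 0" using x0 fx by (simp add: p_def)
  then have "p^2 > 0" by simp
  then have d: "d > 0" unfolding d_def using zero_le_power2[of q] by linarith
  define h where "h x = (p * f x + q * f (A x)) / d" for x
  have bh: "bounded_linear h"
    unfolding h_def
    by (intro bl_div bounded_linear_add bl_mult bf
        bounded_linear_compose[OF bf A.bounded_linear_axioms])
  interpret h: bounded_linear h by fact
  have hx0: "h x0 = (p*p + q*q)/d" by (simp add: h_def p_def q_def)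
  have "p*p + q*q = d" by (simp add: d_def power2_eq_square)
  then have eq1: "(p*p + q*q)/d = 1" using d by simp
  have h0: "h x0 = 1" using hx0 eq1 by (rule trans)
  have h1: "h (A x0) = 0" using iop_sq[OF iA] by (simp add: h_def p_def q_def f.neg)
  have sqA: "A (A x) = - x" for x using iop_sq[OF iA] .
  have sqA1: "A1 (A1 x) = - x" for x using iop_sq[OF iA1] .
  have sqB: "B1 (B1 x) = - x" for x using iop_sq[OF iB] .
  define S where "S u = a u *\<^sub>R x0 - a (A1 u) *\<^sub>R A x0" for u
  define R where "R x = h x *\<^sub>R e - h (A x) *\<^sub>R B1 e" for x
  have blS: "bounded_linear S" unfolding S_def
    by (intro bounded_linear_sub bl_scale_fun
         bounded_linear_compose[OF ba A1.bounded_linear_axioms] ba)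
  have blR: "bounded_linear R" unfolding R_def
    by (intro bounded_linear_sub bl_scale_fun
         bounded_linear_compose[OF bh A.bounded_linear_axioms] bh)
  have AS: "A (S u) = a u *\<^sub>R A x0 + a (A1 u) *\<^sub>R x0" for u
    by (simp add: S_def A.diff A.scaleR sqA)
  have "complex_op S A1 A"
    by (rule coI[OF blS]) (simp only: AS, simp add: S_def sqA1 a.neg)
  moreover have "complex_op R A B1"
    by (rule coI[OF blR]) (simp add: R_def sqA sqB h.neg B1.diff B1.scaleR)
  moreover have "(\<lambda>u. a u *\<^sub>R e - a (A1 u) *\<^sub>R B1 e) = R \<circ> S"
  proof
    fix u
    have "h (S u) = a u" by (simp add: S_def h.diff h.scaleR h0 h1)
    moreover have "h (A (S u)) = a (A1 u)" by (simp add: AS h.add h.scaleR h0 h1)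
    ultimately show "a u *\<^sub>R e - a (A1 u) *\<^sub>R B1 e = (R \<circ> S) u" by (simp add: R_def)
  qed
  ultimately show ?thesis unfolding factors_over_def by blast
qed

definition rep :: "(('v \<Rightarrow> real) \<times> 'v) list \<Rightarrow> 'v \<Rightarrow> 'v::real_normed_vector" where
  "rep ps v = sum_list (map (\<lambda>p. fst p v *\<^sub>R snd p) ps)"

lemma rep_Nil [simp]: "rep [] v = 0" by (simp add: rep_def)
lemma rep_Cons [simp]: "rep (p # ps) v = fst p v *\<^sub>R snd p + rep ps v" by (simp add: rep_def)

lemma rep_bl: "(\<forall>p\<in>set ps. bounded_linear (fst p)) \<Longrightarrow> bounded_linear (rep ps)"
proof (induction ps)
  case Nil
  have "rep [] = (\<lambda>_. 0)" by (rule ext) simp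
  then show ?case by (simp add: bounded_linear_zero)
next
  case (Cons p ps)
  have "rep (p # ps) = (\<lambda>v. fst p v *\<^sub>R snd p + rep ps v)" by (rule ext) simp
  moreover have "bounded_linear (\<lambda>v. fst p v *\<^sub>R snd p)"
    using Cons.prems by (intro bl_scale_fun) auto
  ultimately show ?case using Cons by (simp add: bounded_linear_add)
qed

lemma rep_span: "(\<forall>p\<in>set ps. snd p \<in> span F) \<Longrightarrow> rep ps v \<in> span F"
  by (induction ps) (auto intro: span_add span_scale span_zero)

lemma fin_rep:
  fixes F :: "'v::real_normed_vector set"
  assumes "finite F"
  shows "\<exists>ps. (\<forall>p\<in>set ps. bounded_linear (fst p) \<and> snd p \<in> span F) \<and> (\<forall>v\<in>span F. rep ps v = v)"
  using assms
proof (induction F rule: finite_induct)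
  case empty
  then show ?case by (intro exI[of _ "[]"]) auto
next
  case (insert b F)
  then obtain ps where ps: "\<And>p. p\<in>set ps \<Longrightarrow> bounded_linear (fst p) \<and> snd p \<in> span F"
    and rp: "\<And>v. v\<in>span F \<Longrightarrow> rep ps v = v" by blast
  show ?case
  proof (cases "b \<in> span F")
    case True
    then have "span (insert b F) = span F" by (rule span_redundant)
    show ?thesis unfolding \<open>span (insert b F) = span F\<close>
      by (rule exI[of _ ps]) (use ps rp in auto)
  next
    case False
    have blP: "bounded_linear (rep ps)" using rep_bl ps by blast
    interpret P: bounded_linear "rep ps" by fact
    define w where "w = b - rep ps b"
    have "rep ps b \<in> span F" using rep_span ps by blast
    then have w0: "w \<noteq> 0" using False w_def by auto
    obtain hh :: "'v \<Rightarrow> real" where bh: "bounded_linear hh" and hw: "hh w = norm w"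
      using exists_functional[OF w0] by blast
    interpret hh: bounded_linear hh by fact
    define k where "k v = hh (v - rep ps v) / norm w" for v
    have bk: "bounded_linear k" unfolding k_def
      by (intro bl_div bounded_linear_compose[OF bh] bounded_linear_sub bounded_linear_ident blP)
    interpret k: bounded_linear k by fact
    have k0: "k y = 0" if "y \<in> span F" for y using rp[OF that] by (simp add: k_def)
    have kb: "k b = 1" using w0 hw by (simp add: k_def w_def)
    define ps' where "ps' = (k, b) # map (\<lambda>p. (\<lambda>v. fst p (v - k v *\<^sub>R b), snd p)) ps"
    have "bounded_linear (fst p) \<and> snd p \<in> span (insert b F)" if "p \<in> set ps'" for p
    proof -
      have bb: "b \<in> span (insert b F)" by (simp add: span_base)
      have sub: "span F \<subseteq> span (insert b F)" by (simp add: span_mono subset_insertI)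
      have "p = (k, b) \<or> (\<exists>q\<in>set ps. p = (\<lambda>v. fst q (v - k v *\<^sub>R b), snd q))"
        using that unfolding ps'_def by auto
      then consider "p = (k, b)" | q where "q \<in> set ps" "p = (\<lambda>v. fst q (v - k v *\<^sub>R b), snd q)"
        by blast
      then show ?thesis
      proof cases
        case 1 then show ?thesis using bk bb by simp
      next
        case 2
        have "bounded_linear (\<lambda>v. v - k v *\<^sub>R b)"
          by (intro bounded_linear_sub bounded_linear_ident bl_scale_fun bk)
        then have "bounded_linear (\<lambda>v. fst q (v - k v *\<^sub>R b))"
          using ps[OF 2(1)] bounded_linear_compose by blast
        then show ?thesis using 2 ps[OF 2(1)] sub by auto
      qed
    qed
    moreover have "rep ps' v = v" if vin: "v \<in> span (insert b F)" for v
    proof -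
      obtain t where t: "v - t *\<^sub>R b \<in> span F" using vin span_insert by blast
      define y where "y = v - t *\<^sub>R b"
      have v: "v = y + t *\<^sub>R b" by (simp add: y_def)
      have kv: "k v = t" using k0[OF t] kb by (simp add: v k.add k.scaleR y_def[symmetric])
      have m: "rep (map (\<lambda>p. (\<lambda>v. fst p (v - k v *\<^sub>R b), snd p)) qs) v = rep qs (v - k v *\<^sub>R b)" for qs
        by (induction qs) auto
      show ?thesis using rp[OF t] by (simp add: ps'_def m kv y_def[symmetric]) (simp add: v)
    qed
    ultimately show ?thesis by blast
  qed
qed

lemma fo_finrank:
  fixes A :: "'x::banach \<Rightarrow> 'x" and A1 :: "'u::banach \<Rightarrow> 'u" and B1 :: "'v::banach \<Rightarrow> 'v"
  assumes iA: "i_operator A" and iA1: "i_operator A1" and iB: "i_operator B1"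
    and J: "complex_op J A (sum_op A)" "bij J" and x0: "(x0::'x) \<noteq> 0"
    and cT: "complex_op T A1 B1" and fr: "finite_rank T"
  shows "factors_over A A1 B1 T"
proof -
  obtain F where F: "finite F" "range T \<subseteq> span F" using fr finite_rank_def by blast
  obtain ps where ps: "\<And>p. p\<in>set ps \<Longrightarrow> bounded_linear (fst p) \<and> snd p \<in> span F"
    and rp: "\<And>v. v\<in>span F \<Longrightarrow> rep ps v = v" using fin_rep[OF F(1)] by blast
  interpret B1: bounded_linear B1 using iop_bl[OF iB] .
  have bT: "bounded_linear T" using cT complex_op_def by blast
  define tm where "tm p u = (fst p (T u)/2) *\<^sub>R snd p - (fst p (T (A1 u))/2) *\<^sub>R B1 (snd p)" for p u
  define G where "G qs u = sum_list (map (\<lambda>p. tm p u) qs)" for qs u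
  have fG: "set qs \<subseteq> set ps \<Longrightarrow> factors_over A A1 B1 (G qs)" for qs
  proof (induction qs)
    case Nil
    have "G [] = (\<lambda>_. 0)" by (rule ext) (simp add: G_def)
    then show ?case using fo_zero[OF iA iB] by simp
  next
    case (Cons p qs)
    have "G (p # qs) = (\<lambda>u. tm p u + G qs u)" by (rule ext) (simp add: G_def)
    moreover have "factors_over A A1 B1 (tm p)"
    proof -
      have ba: "bounded_linear (\<lambda>u. fst p (T u) / 2)"
      proof -
        have "bounded_linear (fst p)" using ps Cons.prems by auto
        then have "bounded_linear (\<lambda>u. fst p (T u))" using bounded_linear_compose bT by blast
        then show ?thesis by (rule bl_div)
      qed
      have "tm p = (\<lambda>u. (fst p (T u)/2) *\<^sub>R snd p - (fst p (T (A1 u))/2) *\<^sub>R B1 (snd p))"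
        by (rule ext) (simp add: tm_def)
      then show ?thesis using fo_rank1[OF iA iA1 iB x0 ba, of "snd p"] by simp
    qed
    ultimately show ?case using Cons fo_add[OF iA iB J] by simp
  qed
  have eq: "G qs u = (1/2) *\<^sub>R rep qs (T u) - (1/2) *\<^sub>R B1 (rep qs (T (A1 u)))" for qs u
    by (induction qs) (auto simp: G_def tm_def B1.add B1.scaleR algebra_simps)
  have "G ps = T"
  proof
    fix u
    have "T u \<in> span F" "T (A1 u) \<in> span F" using F(2) by auto
    then have "G ps u = (1/2) *\<^sub>R T u - (1/2) *\<^sub>R B1 (T (A1 u))" using eq rp by simp
    also have "B1 (T (A1 u)) = - T u" using co_app[OF cT] iop_sq[OF iB] by simp
    finally show "G ps u = T u" by (simp add: scaleR_add_left[symmetric])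
  qed
  then show ?thesis using fG by blast
qed

lemma not_selfconj:
  fixes A :: "'x::banach \<Rightarrow> 'x"
  assumes iA: "i_operator A" and J: "complex_op J A (sum_op A)" "bij J"
    and fo: "factors_over A (conj_op A) (conj_op A) id"
  shows "cisomorphic A (conj_op A)"
proof -
  obtain S0 R0 where h: "complex_op S0 (conj_op A) A" "complex_op R0 A (conj_op A)" "id = R0 \<circ> S0"
    using fo unfolding factors_over_def by blast
  note Jf = J_facts[OF iA J]
  define K where "K = inv J"
  have bK: "bounded_linear K" "\<And>p. J (K p) = p" "\<And>x. K (J x) = x" "\<And>a b. K (A a, A b) = A (K (a, b))"
    using Jf unfolding K_def by auto
  have JA: "\<And>x. J (A x) = (A (fst (J x)), A (snd (J x)))" by (rule Jf(5))
  interpret A: bounded_linear A using iop_bl[OF iA] .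
  have bJ: "bounded_linear J" using J complex_op_def by blast
  interpret J: bounded_linear J by fact
  interpret K: bounded_linear K by (rule bK(1))
  have bS: "bounded_linear S0" using h complex_op_def by blast
  have bR: "bounded_linear R0" using h complex_op_def by blast
  interpret S0: bounded_linear S0 by fact
  interpret R0: bounded_linear R0 by fact
  have sqA: "A (A x) = - x" for x using iop_sq[OF iA] .
  have RS: "R0 (S0 x) = x" for x using h(3) by (metis comp_apply id_apply)
  have SA: "S0 (A x) = - A (S0 x)" for x
  proof -
    have "S0 (- A x) = A (S0 x)" using co_app[OF h(1), of x] by (simp add: conj_op_def)
    then have "- S0 (A x) = A (S0 x)" by (simp add: S0.neg)
    then show ?thesis by (metis minus_minus)
  qed
  have RA: "R0 (A x) = - A (R0 x)" for x using co_app[OF h(2), of x] by (simp add: conj_op_def)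
  define F where "F x = (fst (J (R0 x)), S0 (snd (J (R0 x))) + x - S0 (R0 x))" for x
  define Fi where "Fi p = S0 (K (fst p, R0 (snd p))) + snd p - S0 (R0 (snd p))" for p
  define T where "T x = Fi (snd (F x), fst (F x))" for x
  have FFi: "F (Fi p) = p" for p
  proof -
    obtain a b where p: "p = (a, b)" by (cases p)
    have R: "R0 (Fi p) = K (a, R0 b)" by (simp add: Fi_def p R0.add R0.diff RS)
    have "F (Fi p) = (fst (J (K (a, R0 b))), S0 (snd (J (K (a, R0 b)))) + Fi p - S0 (K (a, R0 b)))"
      by (simp add: F_def R)
    also have "\<dots> = (a, b)" by (simp add: bK(2) Fi_def p)
    finally show ?thesis by (simp add: p)
  qed
  have FiF: "Fi (F x) = x" for x
  proof -
    have R: "R0 (snd (F x)) = snd (J (R0 x))" by (simp add: F_def R0.add R0.diff RS)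
    have "Fi (F x) = S0 (K (fst (F x), snd (J (R0 x)))) + snd (F x) - S0 (snd (J (R0 x)))"
      by (simp add: Fi_def R)
    also have "\<dots> = x" by (simp add: F_def bK(3))
    finally show ?thesis .
  qed
  have TT: "T (T x) = x" for x by (simp add: T_def FFi FiF)
  have FA: "F (A x) = (- A (fst (F x)), A (snd (F x)))" for x
    by (simp add: F_def RA J.neg JA SA S0.neg A.add A.diff)
  have FiA: "Fi (A u, - A v) = - A (Fi (u, v))" for u v
    by (simp add: Fi_def R0.neg RA bK(4) SA S0.neg A.add A.diff A.neg)
  have TA: "T (A x) = - A (T x)" for x by (simp add: T_def FA FiA)
  have blF: "bounded_linear F" unfolding F_def
    by (intro bounded_linear_Pair bounded_linear_add bounded_linear_sub bounded_linear_ident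
        bounded_linear_compose[OF bounded_linear_fst] bounded_linear_compose[OF bounded_linear_snd]
        bounded_linear_compose[OF bJ] bounded_linear_compose[OF bS] bounded_linear_compose[OF bR] bR bS)
  have blFi: "bounded_linear Fi" unfolding Fi_def
    by (intro bounded_linear_Pair bounded_linear_add bounded_linear_sub bounded_linear_fst bounded_linear_snd
        bounded_linear_compose[OF bK(1)] bounded_linear_compose[OF bS] bounded_linear_compose[OF bR])
  have blT: "bounded_linear T" unfolding T_def
    by (intro bounded_linear_compose[OF blFi] bounded_linear_Pair
         bounded_linear_compose[OF bounded_linear_fst blF] bounded_linear_compose[OF bounded_linear_snd blF])
  have "complex_op T A (conj_op A)" by (rule coI[OF blT]) (simp add: TA conj_op_def)
  moreover have "bij T" by (rule o_bij[of T]) (auto simp: TT)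
  ultimately show ?thesis unfolding cisomorphic_def by blast
qed

theorem proposition6:
  fixes A :: "'x::banach \<Rightarrow> 'x"
  assumes "i_operator A"
    and "\<not> cisomorphic A (conj_op A)"
    and "cisomorphic A (sum_op A)"
  shows
    \<comment> \<open>(1) every member of C is a complex operator\<close>
    "(\<forall>(A1::'u::banach \<Rightarrow> 'u) (B1::'v::banach \<Rightarrow> 'v) T.
        i_operator A1 \<and> i_operator B1 \<and> factors_over A A1 B1 T \<longrightarrow> complex_op T A1 B1)
   \<comment> \<open>(2) each component C(U,V) is a complex linear subspace\<close>
   \<and> (\<forall>(A1::'u::banach \<Rightarrow> 'u) (B1::'v::banach \<Rightarrow> 'v).
        i_operator A1 \<and> i_operator B1 \<longrightarrow>
          factors_over A A1 B1 (\<lambda>_. 0)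
        \<and> (\<forall>T1 T2. factors_over A A1 B1 T1 \<and> factors_over A A1 B1 T2
                \<longrightarrow> factors_over A A1 B1 (\<lambda>u. T1 u + T2 u))
        \<and> (\<forall>c T. factors_over A A1 B1 T \<longrightarrow> factors_over A A1 B1 (\<lambda>u. cscale B1 c (T u))))
   \<comment> \<open>(3) C contains all finite rank complex operators\<close>
   \<and> (\<forall>(A1::'u::banach \<Rightarrow> 'u) (B1::'v::banach \<Rightarrow> 'v) T.
        i_operator A1 \<and> i_operator B1 \<and> complex_op T A1 B1 \<and> finite_rank T
          \<longrightarrow> factors_over A A1 B1 T)
   \<comment> \<open>(4) ideal property\<close>
   \<and> (\<forall>(A1::'u::banach \<Rightarrow> 'u) (B1::'v::banach \<Rightarrow> 'v) (C1::'w::banach \<Rightarrow> 'w)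
        (D1::'z::banach \<Rightarrow> 'z) T R S.
        i_operator A1 \<and> i_operator B1 \<and> i_operator C1 \<and> i_operator D1
        \<and> factors_over A A1 B1 T \<and> complex_op R B1 C1 \<and> complex_op S D1 A1
          \<longrightarrow> factors_over A D1 C1 (R \<circ> T \<circ> S))
   \<comment> \<open>(5) C is not self conjugate\<close>
   \<and> (\<exists>(A1::'x \<Rightarrow> 'x) (B1::'x \<Rightarrow> 'x) T.
        i_operator A1 \<and> i_operator B1 \<and> factors_over A A1 B1 T
        \<and> \<not> factors_over A (conj_op A1) (conj_op B1) T)"
proof -
  note iA = assms(1)
  obtain J where J: "complex_op J A (sum_op A)" "bij J" using assms(3) cisomorphic_def by blast
  have "\<exists>x0::'x. x0 \<noteq> 0"
  proof (rule ccontr)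
    assume "\<not> (\<exists>x0::'x. x0 \<noteq> 0)"
    then have z: "\<And>x::'x. x = 0" by blast
    have "bounded_linear (id :: 'x \<Rightarrow> 'x)" using bounded_linear_ident by (simp add: id_def)
    moreover have "id \<circ> A = conj_op A \<circ> id" by (rule ext) (metis z)
    ultimately have "complex_op id A (conj_op A)" unfolding complex_op_def by blast
    then have "cisomorphic A (conj_op A)" unfolding cisomorphic_def using bij_id by blast
    then show False using assms(2) by blast
  qed
  then obtain x0 :: 'x where x0: "x0 \<noteq> 0" by blast
  have c1: "\<forall>(A1::'u::banach \<Rightarrow> 'u) (B1::'v::banach \<Rightarrow> 'v) T.
        i_operator A1 \<and> i_operator B1 \<and> factors_over A A1 B1 T \<longrightarrow> complex_op T A1 B1"
    using fo_member by blast
  have c2: "\<forall>(A1::'u::banach \<Rightarrow> 'u) (B1::'v::banach \<Rightarrow> 'v).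
        i_operator A1 \<and> i_operator B1 \<longrightarrow>
          factors_over A A1 B1 (\<lambda>_. 0)
        \<and> (\<forall>T1 T2. factors_over A A1 B1 T1 \<and> factors_over A A1 B1 T2
                \<longrightarrow> factors_over A A1 B1 (\<lambda>u. T1 u + T2 u))
        \<and> (\<forall>c T. factors_over A A1 B1 T \<longrightarrow> factors_over A A1 B1 (\<lambda>u. cscale B1 c (T u)))"
  proof (intro allI impI conjI)
    fix A1 :: "'u \<Rightarrow> 'u" and B1 :: "'v \<Rightarrow> 'v"
    assume i: "i_operator A1 \<and> i_operator B1"
    then have iB: "i_operator B1" by blast
    show "factors_over A A1 B1 (\<lambda>_. 0)" by (rule fo_zero[OF iA iB])
    fix T1 T2 assume "factors_over A A1 B1 T1 \<and> factors_over A A1 B1 T2"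
    then show "factors_over A A1 B1 (\<lambda>u. T1 u + T2 u)" using fo_add[OF iA iB J] by blast
  next
    fix A1 :: "'u \<Rightarrow> 'u" and B1 :: "'v \<Rightarrow> 'v" and c T
    assume i: "i_operator A1 \<and> i_operator B1" and f: "factors_over A A1 B1 T"
    then have iB: "i_operator B1" by blast
    show "factors_over A A1 B1 (\<lambda>u. cscale B1 c (T u))" by (rule fo_scale[OF iA iB f])
  qed
  have c3: "\<forall>(A1::'u::banach \<Rightarrow> 'u) (B1::'v::banach \<Rightarrow> 'v) T.
        i_operator A1 \<and> i_operator B1 \<and> complex_op T A1 B1 \<and> finite_rank T
          \<longrightarrow> factors_over A A1 B1 T"
    using fo_finrank[OF iA _ _ J x0] by blast
  have c4: "\<forall>(A1::'u::banach \<Rightarrow> 'u) (B1::'v::banach \<Rightarrow> 'v) (C1::'w::banach \<Rightarrow> 'w)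
        (D1::'z::banach \<Rightarrow> 'z) T R S.
        i_operator A1 \<and> i_operator B1 \<and> i_operator C1 \<and> i_operator D1
        \<and> factors_over A A1 B1 T \<and> complex_op R B1 C1 \<and> complex_op S D1 A1
          \<longrightarrow> factors_over A D1 C1 (R \<circ> T \<circ> S)"
    using fo_comp by blast
  have c5: "\<exists>(A1::'x \<Rightarrow> 'x) (B1::'x \<Rightarrow> 'x) T.
        i_operator A1 \<and> i_operator B1 \<and> factors_over A A1 B1 T
        \<and> \<not> factors_over A (conj_op A1) (conj_op B1) T"
  proof (intro exI conjI)
    show "i_operator A" by (rule iA)
    show "i_operator A" by (rule iA)
    have "bounded_linear (id :: 'x \<Rightarrow> 'x)" using bounded_linear_ident by (simp add: id_def)
    then have "complex_op id A A" unfolding complex_op_def by simp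
    then show "factors_over A A A id" unfolding factors_over_def by (intro exI[of _ id]) simp
    show "\<not> factors_over A (conj_op A) (conj_op A) id"
      using not_selfconj[OF iA J] assms(2) by blast
  qed
  show ?thesis by (intro conjI) (rule c1, rule c2, rule c3, rule c4, rule c5)
qed

end
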